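(* Let $\mathcal{M}=(\mathcal{S},\mathcal{A},P,r,\gamma,\mu)$ be an MDP with finite state and action spaces, $\gamma\in[0,1)$ and initial state-action distribution $\mu$, and let $\pi$ be a fixed stationary policy. For a state-action pair $(s,a)$ and $k\in\mathbb{N}$, let $p_k(s,a)$ be the probability that $(s_k,a_k)=(s,a)$ when $(s_0,a_0)\sim d^\pi$ and the process evolves by $s_{j+1}\sim P(\cdot|s_j,a_j)$, $a_{j+1}\sim\pi(\cdot|s_{j+1})$. Then for every $k\in\mathbb{N}$ and every $(s,a)$ with $\mu(s,a)>0$, \[\frac{p_k(s,a)}{d^\pi(s,a)}\le\frac{1}{(1-\gamma)\mu(s,a)}.\]
   Context: $d^\pi(s,a)=(1-\gamma)\sum_{t\ge0}\gamma^t\mathbb{P}(s_t=s,a_t=a;\pi,\mu)$, where $(s_0,a_0)\sim\mu$ and subsequent states and actions follow $P$ and $\pi$. *)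

theory Defs
  imports "HOL-Analysis.Analysis"
begin

text \<open>Transition kernel P s a s' = P(s'|s,a); policy pol s a = pi(a|s);
  distributions over state-action pairs are functions 's => 'a => real.\<close>

definition is_distr :: "('b::finite \<Rightarrow> real) \<Rightarrow> bool" where
  "is_distr q \<longleftrightarrow> (\<forall>x. 0 \<le> q x) \<and> (\<Sum>x\<in>UNIV. q x) = 1"

definition is_sa_distr :: "('s::finite \<Rightarrow> 'a::finite \<Rightarrow> real) \<Rightarrow> bool" where
  "is_sa_distr q \<longleftrightarrow> (\<forall>s a. 0 \<le> q s a) \<and> (\<Sum>s\<in>UNIV. \<Sum>a\<in>UNIV. q s a) = 1"

definition is_kernel :: "('s::finite \<Rightarrow> 'a::finite \<Rightarrow> 's \<Rightarrow> real) \<Rightarrow> bool" where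
  "is_kernel P \<longleftrightarrow> (\<forall>s a. is_distr (P s a))"

definition is_policy :: "('s::finite \<Rightarrow> 'a::finite \<Rightarrow> real) \<Rightarrow> bool" where
  "is_policy pol \<longleftrightarrow> (\<forall>s. is_distr (pol s))"

definition sa_step ::
  "('s::finite \<Rightarrow> 'a::finite \<Rightarrow> 's \<Rightarrow> real) \<Rightarrow> ('s \<Rightarrow> 'a \<Rightarrow> real) \<Rightarrow>
   ('s \<Rightarrow> 'a \<Rightarrow> real) \<Rightarrow> ('s \<Rightarrow> 'a \<Rightarrow> real)" where
  "sa_step P pol q = (\<lambda>s' a'. (\<Sum>s\<in>UNIV. \<Sum>a\<in>UNIV. q s a * P s a s') * pol s' a')"

definition sa_dist ::
  "('s::finite \<Rightarrow> 'a::finite \<Rightarrow> 's \<Rightarrow> real) \<Rightarrow> ('s \<Rightarrow> 'a \<Rightarrow> real) \<Rightarrow>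
   ('s \<Rightarrow> 'a \<Rightarrow> real) \<Rightarrow> nat \<Rightarrow> ('s \<Rightarrow> 'a \<Rightarrow> real)" where
  "sa_dist P pol q t = (sa_step P pol ^^ t) q"

definition occupancy ::
  "('s::finite \<Rightarrow> 'a::finite \<Rightarrow> 's \<Rightarrow> real) \<Rightarrow> ('s \<Rightarrow> 'a \<Rightarrow> real) \<Rightarrow> real \<Rightarrow>
   ('s \<Rightarrow> 'a \<Rightarrow> real) \<Rightarrow> ('s \<Rightarrow> 'a \<Rightarrow> real)" where
  "occupancy P pol \<gamma> \<mu> = (\<lambda>s a. (1 - \<gamma>) * (\<Sum>t. \<gamma> ^ t * sa_dist P pol \<mu> t s a))"

end

theory Submission
  imports Defs
begin

lemma step_mass:
  fixes P :: "'s::finite \<Rightarrow> 'a::finite \<Rightarrow> 's \<Rightarrow> real"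
  assumes "is_kernel P" "is_policy pol"
  shows "(\<Sum>s'\<in>UNIV. \<Sum>a'\<in>UNIV. sa_step P pol q s' a') = (\<Sum>s\<in>UNIV. \<Sum>a\<in>UNIV. q s a)"
proof -
  have pol1: "\<And>s. (\<Sum>a\<in>UNIV. pol s a) = 1" using assms(2) by (simp add: is_policy_def is_distr_def)
  have P1: "\<And>s a. (\<Sum>s'\<in>UNIV. P s a s') = 1" using assms(1) by (simp add: is_kernel_def is_distr_def)
  have "(\<Sum>s'\<in>UNIV. \<Sum>a'\<in>UNIV. sa_step P pol q s' a')
      = (\<Sum>s'\<in>UNIV. (\<Sum>s\<in>UNIV. \<Sum>a\<in>UNIV. q s a * P s a s') * (\<Sum>a'\<in>UNIV. pol s' a'))"
    unfolding sa_step_def by (simp add: sum_distrib_left)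
  also have "\<dots> = (\<Sum>s'\<in>UNIV. \<Sum>s\<in>UNIV. \<Sum>a\<in>UNIV. q s a * P s a s')" by (simp add: pol1)
  also have "\<dots> = (\<Sum>s\<in>UNIV. \<Sum>s'\<in>UNIV. \<Sum>a\<in>UNIV. q s a * P s a s')" by (rule sum.swap)
  also have "\<dots> = (\<Sum>s\<in>UNIV. \<Sum>a\<in>UNIV. \<Sum>s'\<in>UNIV. q s a * P s a s')" by (rule sum.cong[OF refl], rule sum.swap)
  also have "\<dots> = (\<Sum>s\<in>UNIV. \<Sum>a\<in>UNIV. q s a * (\<Sum>s'\<in>UNIV. P s a s'))" by (simp add: sum_distrib_left)
  also have "\<dots> = (\<Sum>s\<in>UNIV. \<Sum>a\<in>UNIV. q s a)" by (simp add: P1)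
  finally show ?thesis .
qed

lemma step_nonneg:
  fixes P :: "'s::finite \<Rightarrow> 'a::finite \<Rightarrow> 's \<Rightarrow> real"
  assumes "is_kernel P" "is_policy pol" "\<forall>s a. 0 \<le> q s a"
  shows "0 \<le> sa_step P pol q s' a'"
proof -
  have "\<forall>s a s'. 0 \<le> P s a s'" using assms(1) by (simp add: is_kernel_def is_distr_def)
  moreover have "\<forall>s a. 0 \<le> pol s a" using assms(2) by (simp add: is_policy_def is_distr_def)
  ultimately show ?thesis using assms(3) unfolding sa_step_def
    by (intro mult_nonneg_nonneg sum_nonneg) auto
qed

lemma dist_props:
  fixes P :: "'s::finite \<Rightarrow> 'a::finite \<Rightarrow> 's \<Rightarrow> real"
  assumes "is_kernel P" "is_policy pol" "\<forall>s a. 0 \<le> q s a"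
  shows "(\<forall>s a. 0 \<le> sa_dist P pol q t s a) \<and>
    (\<Sum>s\<in>UNIV. \<Sum>a\<in>UNIV. sa_dist P pol q t s a) = (\<Sum>s\<in>UNIV. \<Sum>a\<in>UNIV. q s a)"
proof (induction t)
  case 0
  then show ?case using assms by (simp add: sa_dist_def)
next
  case (Suc t)
  have e: "sa_dist P pol q (Suc t) = sa_step P pol (sa_dist P pol q t)"
    by (simp add: sa_dist_def)
  show ?case unfolding e using Suc step_mass[OF assms(1,2)] step_nonneg[OF assms(1,2)] by auto
qed

lemma entry_le:
  fixes q :: "'s::finite \<Rightarrow> 'a::finite \<Rightarrow> real"
  assumes "\<forall>s a. 0 \<le> q s a"
  shows "q s a \<le> (\<Sum>s\<in>UNIV. \<Sum>a\<in>UNIV. q s a)"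
proof -
  have "q s a \<le> (\<Sum>a\<in>UNIV. q s a)" using assms by (intro member_le_sum) auto
  also have "\<dots> \<le> (\<Sum>s\<in>UNIV. \<Sum>a\<in>UNIV. q s a)" using assms by (intro member_le_sum sum_nonneg) auto
  finally show ?thesis .
qed

theorem lemma3:
  fixes P :: "'s::finite \<Rightarrow> 'a::finite \<Rightarrow> 's \<Rightarrow> real"
    and pol :: "'s \<Rightarrow> 'a \<Rightarrow> real"
    and \<mu> :: "'s \<Rightarrow> 'a \<Rightarrow> real"
    and \<gamma> :: real and k :: nat and s :: 's and a :: 'a
  assumes "is_kernel P" and "is_policy pol" and "is_sa_distr \<mu>"
    and "0 \<le> \<gamma>" and "\<gamma> < 1"
    and "\<mu> s a > 0"
  shows "sa_dist P pol (occupancy P pol \<gamma> \<mu>) k s a / occupancy P pol \<gamma> \<mu> s a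
           \<le> 1 / ((1 - \<gamma>) * \<mu> s a)"
proof -
  define d where "d = occupancy P pol \<gamma> \<mu>"
  have mu0: "\<forall>s a. 0 \<le> \<mu> s a" and mu1: "(\<Sum>s\<in>UNIV. \<Sum>a\<in>UNIV. \<mu> s a) = 1"
    using assms(3) by (auto simp: is_sa_distr_def)
  note dp = dist_props[OF assms(1,2) mu0]
  have bnd: "sa_dist P pol \<mu> t s' a' \<le> 1" for t s' a'
    using entry_le[of "sa_dist P pol \<mu> t" s' a'] dp[of t] mu1 by auto
  have summ: "summable (\<lambda>t. \<gamma> ^ t * sa_dist P pol \<mu> t s' a')" for s' a'
  proof (rule summable_comparison_test[where g="\<lambda>t. \<gamma>^t"])
    show "\<exists>N. \<forall>n\<ge>N. norm (\<gamma> ^ n * sa_dist P pol \<mu> n s' a') \<le> \<gamma> ^ n"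
      using dp bnd assms(4) by (auto intro!: mult_left_le simp: abs_mult)
    show "summable (\<lambda>t. \<gamma>^t)" using assms(4,5) by (simp add: summable_geometric)
  qed
  have tn: "\<forall>t s' a'. 0 \<le> \<gamma> ^ t * sa_dist P pol \<mu> t s' a'" using dp assms(4) by auto
  have dnn: "\<forall>s' a'. 0 \<le> d s' a'" unfolding d_def occupancy_def
    using assms(4,5) dp summ by (auto intro!: mult_nonneg_nonneg suminf_nonneg)
  have dsum: "(\<Sum>s\<in>UNIV. \<Sum>a\<in>UNIV. d s a) = 1"
  proof -
    have "(\<Sum>s\<in>UNIV. \<Sum>a\<in>UNIV. d s a) = (1-\<gamma>) * (\<Sum>s\<in>UNIV. \<Sum>a\<in>UNIV. \<Sum>t. \<gamma> ^ t * sa_dist P pol \<mu> t s a)"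
      unfolding d_def occupancy_def by (simp add: sum_distrib_left)
    also have "(\<Sum>s\<in>UNIV. \<Sum>a\<in>UNIV. \<Sum>t. \<gamma> ^ t * sa_dist P pol \<mu> t s a)
        = (\<Sum>s\<in>UNIV. \<Sum>t. \<Sum>a\<in>UNIV. \<gamma> ^ t * sa_dist P pol \<mu> t s a)"
      by (intro sum.cong refl suminf_sum[symmetric] summ)
    also have "\<dots> = (\<Sum>t. \<Sum>s\<in>UNIV. \<Sum>a\<in>UNIV. \<gamma> ^ t * sa_dist P pol \<mu> t s a)"
      by (intro suminf_sum[symmetric] summable_sum summ)
    also have "\<dots> = (\<Sum>t. \<gamma> ^ t)"
      using dp mu1 by (simp add: sum_distrib_left[symmetric])
    also have "\<dots> = 1 / (1 - \<gamma>)" using assms(4,5) by (simp add: suminf_geometric)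
    finally show ?thesis using assms(5) by simp
  qed
  have pk: "sa_dist P pol d k s a \<le> 1"
    using entry_le[of "sa_dist P pol d k" s a] dist_props[OF assms(1,2) dnn, of k] dsum by auto
  have pk0: "0 \<le> sa_dist P pol d k s a" using dist_props[OF assms(1,2) dnn, of k] by auto
  have "(\<Sum>t\<in>{0}. \<gamma> ^ t * sa_dist P pol \<mu> t s a) \<le> (\<Sum>t. \<gamma> ^ t * sa_dist P pol \<mu> t s a)"
    by (rule sum_le_suminf) (use summ tn in auto)
  hence "\<mu> s a \<le> (\<Sum>t. \<gamma> ^ t * sa_dist P pol \<mu> t s a)" by (simp add: sa_dist_def)
  hence dge: "(1-\<gamma>) * \<mu> s a \<le> d s a" unfolding d_def occupancy_def using assms(5) by simp
  have pos: "0 < (1-\<gamma>) * \<mu> s a" using assms(5,6) by simp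
  have "sa_dist P pol d k s a / d s a \<le> 1 / d s a"
    using pk pos dge by (intro divide_right_mono) auto
  also have "\<dots> \<le> 1 / ((1 - \<gamma>) * \<mu> s a)" using pos dge by (intro divide_left_mono) auto
  finally show ?thesis unfolding d_def .
qed

end
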